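(* Let the radius distribution $f$ belong to $\mathrm{RV}_{-1}$. Then there exists $a^*>0$ such that $$\lim_{n\to\infty}\mathbb{P}(T_nf(n)\le a^* )=1.$$
   Context: Covering process: $R$ takes values in $\{1,2,\dots\}$, $f(r)=\mathbb{P}(R\ge r)$ for real $r\ge1$. On $\mathbb{Z}/n\mathbb{Z}$, let $(R_k)$ be i.i.d. copies of $R$, $(U_k)$ i.i.d. uniform on $\mathbb{Z}/n\mathbb{Z}$, independent; $\mathcal{O}_k=\{U_k,\dots,U_k+R_k-1\}$ (mod $n$), $C_0=\emptyset$, $C_k=C_{k-1}\cup\mathcal{O}_k$; with an independent rate-one Poisson process $N(t)$, $X_t=C_{N(t)}$ and $T_n=\inf\{t:X_t=\mathbb{Z}/n\mathbb{Z}\}$. $U\in\mathrm{RV}_p$ means $\lim_{x\to\infty}U(xt)/U(x)=t^p$ for all $t>0$. *)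

theory Defs
  imports "HOL-Probability.Probability"
begin

text \<open>Arc \<open>O = {u, u+1, ..., u+r-1}\<close> in Z/nZ, with Z/nZ represented by \<open>{0..<n}\<close>.\<close>
definition arc :: "nat \<Rightarrow> nat \<Rightarrow> nat \<Rightarrow> nat set" where
  "arc n u r = {(u + j) mod n | j. j < r}"

text \<open>Law of the covered set \<open>C_k\<close>: \<open>C_0 = {}\<close>, \<open>C_k = C_(k-1) \<union> O_k\<close>, where
  \<open>O_k\<close> is the arc started at an independent uniform point \<open>U_k\<close> of Z/nZ with an
  independent length \<open>R_k\<close> distributed as \<open>R\<close>.\<close>
fun cover_pmf :: "nat pmf \<Rightarrow> nat \<Rightarrow> nat \<Rightarrow> nat set pmf" where
  "cover_pmf R n 0 = return_pmf {}"
| "cover_pmf R n (Suc k) =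
     bind_pmf (cover_pmf R n k) (\<lambda>C.
     bind_pmf (pmf_of_set {..<n}) (\<lambda>u.
     bind_pmf R (\<lambda>r. return_pmf (C \<union> arc n u r))))"

text \<open>Law of \<open>X_t = C_(N(t))\<close>, with \<open>N\<close> an independent rate-one Poisson process
  (so \<open>N(t)\<close> is Poisson(t), and \<open>N(0) = 0\<close>).\<close>
definition X_pmf :: "nat pmf \<Rightarrow> nat \<Rightarrow> real \<Rightarrow> nat set pmf" where
  "X_pmf R n t = (if t = 0 then cover_pmf R n 0
                  else bind_pmf (poisson_pmf t) (cover_pmf R n))"

text \<open>\<open>P(T_n \<le> t)\<close> for \<open>t \<ge> 0\<close>. Since \<open>X_t\<close> is nondecreasing and right-continuous
  (piecewise constant) in \<open>t\<close>, \<open>T_n \<le> t\<close> iff \<open>X_t = Z/nZ\<close>.\<close>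
definition cover_time_le :: "nat pmf \<Rightarrow> nat \<Rightarrow> real \<Rightarrow> real" where
  "cover_time_le R n t = measure_pmf.prob (X_pmf R n t) {{..<n}}"

definition radius_tail :: "nat pmf \<Rightarrow> real \<Rightarrow> real" where
  "radius_tail R r = measure_pmf.prob R {k. real k \<ge> r}"

definition regularly_varying :: "real \<Rightarrow> (real \<Rightarrow> real) \<Rightarrow> bool" where
  "regularly_varying p U \<longleftrightarrow>
     (\<forall>t>0. ((\<lambda>x. U (x * t) / U x) \<longlongrightarrow> t powr p) at_top)"

end

theory Submission
  imports Defs
begin

definition prd :: "nat \<Rightarrow> nat \<Rightarrow> nat" where
  "prd n u = (if u = 0 then n - 1 else u - 1)"

definition gaps :: "nat \<Rightarrow> nat set \<Rightarrow> nat set" where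
  "gaps n C = {z \<in> {..<n}. z \<notin> C \<and> Suc z mod n \<in> C}"

definition dst :: "nat \<Rightarrow> nat \<Rightarrow> nat \<Rightarrow> nat" where
  "dst n z u = (if u \<le> z then z - u else z + n - u)"

lemma arc_subset: "0 < n \<Longrightarrow> arc n u r \<subseteq> {..<n}"
  by (auto simp: arc_def)

lemma arc_mono: "r' \<le> r \<Longrightarrow> arc n u r' \<subseteq> arc n u r"
  by (auto simp: arc_def)

lemma arc_empty_iff: "0 < n \<Longrightarrow> arc n u r = {} \<longleftrightarrow> r = 0"
  by (auto simp: arc_def)

lemma mem_arc_iff:
  assumes "u < n" "z < n"
  shows "z \<in> arc n u r \<longleftrightarrow> dst n z u < r"
proof
  assume "z \<in> arc n u r"
  then obtain j where j: "j < r" "z = (u + j) mod n" by (auto simp: arc_def)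
  have "(u + dst n z u) mod n = z" using assms by (auto simp: dst_def)
  have "dst n z u < n" using assms by (auto simp: dst_def)
  have "j mod n = dst n z u"
  proof -
    have "(u + j) mod n = (u + dst n z u) mod n"
      using j \<open>(u + dst n z u) mod n = z\<close> by simp
    then have "j mod n = dst n z u mod n" using nat_mod_eq_iff by auto
    then show ?thesis using \<open>dst n z u < n\<close> by simp
  qed
  then have "dst n z u \<le> j" by (metis mod_less_eq_dividend)
  then show "dst n z u < r" using j by simp
next
  assume "dst n z u < r"
  moreover have "(u + dst n z u) mod n = z" using assms by (auto simp: dst_def)
  ultimately show "z \<in> arc n u r" unfolding arc_def by (metis (mono_tags, lifting) mem_Collect_eq)
qed

lemma card_arc_hits:
  assumes "z < n"
  shows "card {u \<in> {..<n}. z \<in> arc n u r} = min r n"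
proof -
  have "{u \<in> {..<n}. z \<in> arc n u r} = (\<lambda>d. dst n z d) ` {..<min r n}"
  proof (intro equalityI subsetI)
    fix u assume "u \<in> {u \<in> {..<n}. z \<in> arc n u r}"
    then have u: "u < n" "dst n z u < r" using mem_arc_iff assms by auto
    have "dst n z (dst n z u) = u" using u assms by (auto simp: dst_def)
    moreover have "dst n z u < min r n" using u assms by (auto simp: dst_def)
    ultimately show "u \<in> (\<lambda>d. dst n z d) ` {..<min r n}" by (metis image_eqI lessThan_iff)
  next
    fix u assume "u \<in> (\<lambda>d. dst n z d) ` {..<min r n}"
    then obtain d where d: "d < min r n" "u = dst n z d" by auto
    have "u < n" using d assms by (auto simp: dst_def)
    moreover have "dst n z u = d" using d assms by (auto simp: dst_def)
    ultimately show "u \<in> {u \<in> {..<n}. z \<in> arc n u r}" using mem_arc_iff assms d by auto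
  qed
  moreover have "inj_on (\<lambda>d. dst n z d) {..<min r n}"
  proof (rule inj_onI)
    fix x y assume "x \<in> {..<min r n}" "y \<in> {..<min r n}" "dst n z x = dst n z y"
    then show "x = y" using assms by (auto simp: dst_def split: if_splits)
  qed
  ultimately show ?thesis by (simp add: card_image)
qed

lemma card_arc_misses:
  assumes "z < n"
  shows "card {u \<in> {..<n}. z \<notin> arc n u r} = n - min r n"
proof -
  have "{u \<in> {..<n}. z \<notin> arc n u r} = {..<n} - {u \<in> {..<n}. z \<in> arc n u r}" by auto
  moreover have "card ({..<n} - {u \<in> {..<n}. z \<in> arc n u r}) = n - card {u \<in> {..<n}. z \<in> arc n u r}"
    by (subst card_Diff_subset) auto
  ultimately show ?thesis using card_arc_hits[OF assms, of r] by simp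
qed

lemma gaps_nonempty:
  assumes "C \<subseteq> {..<n}" "C \<noteq> {}" "C \<noteq> {..<n}"
  shows "gaps n C \<noteq> {}"
proof
  assume g: "gaps n C = {}"
  obtain x where x: "x < n" "x \<notin> C" using assms by auto
  obtain y where y: "y \<in> C" using assms by auto
  have yn: "y < n" using y assms by auto
  have "\<forall>d. (x + d) mod n \<notin> C"
  proof
    fix d show "(x + d) mod n \<notin> C"
    proof (induction d)
      case 0 then show ?case using x by simp
    next
      case (Suc d)
      have "(x + d) mod n < n" using x by simp
      then have "Suc ((x + d) mod n) mod n \<notin> C" using Suc g unfolding gaps_def by blast
      then show ?case by (simp add: mod_Suc_eq)
    qed
  qed
  then have "(x + (y + n - x)) mod n \<notin> C" by blast
  then show False using x yn y by simp
qed

lemma mod_cancel_left: "(a + x) mod n = (a + y) mod n \<Longrightarrow> x mod n = y mod (n::nat)"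
  by (simp add: nat_mod_eq_iff)

lemma arcI: "j < r \<Longrightarrow> (u + j) mod n \<in> arc n u r"
  unfolding arc_def by blast

lemma arcE: "x \<in> arc n u r \<Longrightarrow> \<exists>j<r. x = (u + j) mod n"
  unfolding arc_def by blast

lemma gaps_union_arc:
  assumes "u < n"
  shows "gaps n (C \<union> arc n u r) \<subseteq> {z \<in> gaps n C. z \<notin> arc n u r} \<union> {z. z = prd n u \<and> z \<notin> C \<and> 1 \<le> r}"
proof
  fix z assume z: "z \<in> gaps n (C \<union> arc n u r)"
  then have zn: "z < n" "z \<notin> C" "z \<notin> arc n u r" "Suc z mod n \<in> C \<union> arc n u r"
    by (auto simp: gaps_def)
  show "z \<in> {z \<in> gaps n C. z \<notin> arc n u r} \<union> {z. z = prd n u \<and> z \<notin> C \<and> 1 \<le> r}"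
  proof (cases "Suc z mod n \<in> C")
    case True then show ?thesis using zn by (auto simp: gaps_def)
  next
    case False
    then have "Suc z mod n \<in> arc n u r" using zn by auto
    then obtain j where j: "j < r" "Suc z mod n = (u + j) mod n" using arcE by blast
    have "j = 0"
    proof (rule ccontr)
      assume "j \<noteq> 0"
      then have "z = (u + (j - 1)) mod n"
      proof -
        have e: "u + j = 1 + (u + (j - 1))" using \<open>j \<noteq> 0\<close> by simp
        have "(1 + z) mod n = (u + j) mod n" using j(2) by simp
        then have "(1 + z) mod n = (1 + (u + (j - 1))) mod n" by (simp only: e)
        then have "z mod n = (u + (j - 1)) mod n" by (rule mod_cancel_left)
        then show ?thesis using zn by simp
      qed
      moreover have "j - 1 < r" using j by simp
      ultimately have "z \<in> arc n u r" using arcI by metis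
      then show False using zn by simp
    qed
    then have "Suc z mod n = u" using j assms by simp
    then have "z = prd n u"
    proof (cases "Suc z = n")
      case True then show ?thesis using \<open>Suc z mod n = u\<close> by (simp add: prd_def)
    next
      case False then have "Suc z < n" using zn by simp
      then show ?thesis using \<open>Suc z mod n = u\<close> by (simp add: prd_def)
    qed
    then show ?thesis using zn j by auto
  qed
qed

lemma bij_prd: "0 < n \<Longrightarrow> bij_betw (prd n) {..<n} {..<n}"
proof -
  assume n: "0 < n"
  have inj: "inj_on (prd n) {..<n}"
    by (rule inj_onI) (auto simp: prd_def split: if_splits)
  have "prd n ` {..<n} \<subseteq> {..<n}" using n by (auto simp: prd_def)
  then show ?thesis using inj
    by (simp add: bij_betw_def endo_inj_surj)
qed

fun covf :: "nat pmf \<Rightarrow> nat \<Rightarrow> nat set \<Rightarrow> nat \<Rightarrow> nat set pmf" where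
  "covf Q n C 0 = return_pmf C"
| "covf Q n C (Suc k) = bind_pmf (covf Q n C k) (\<lambda>D.
     bind_pmf (pmf_of_set {..<n}) (\<lambda>u. bind_pmf Q (\<lambda>r. return_pmf (D \<union> arc n u r))))"

lemma cover_covf: "cover_pmf Q n k = covf Q n {} k"
  by (induction k) simp_all

lemma covf_Suc': "covf Q n C (Suc k) =
   bind_pmf (pmf_of_set {..<n}) (\<lambda>u. bind_pmf Q (\<lambda>r. covf Q n (C \<union> arc n u r) k))"
proof (induction k arbitrary: C)
  case 0 then show ?case by (simp add: bind_return_pmf)
next
  case (Suc k)
  show ?case
    by (subst covf.simps(2), subst Suc, simp add: bind_assoc_pmf)
qed

lemma covf_subset: "0 < n \<Longrightarrow> C \<subseteq> {..<n} \<Longrightarrow> D \<in> set_pmf (covf Q n C k) \<Longrightarrow> D \<subseteq> {..<n}"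
  by (induction k arbitrary: D) (auto simp: arc_def)

lemma integrable_bounded_pmf:
  fixes f :: "'a \<Rightarrow> real"
  assumes "\<And>x. \<bar>f x\<bar> \<le> B"
  shows "integrable (measure_pmf Q) f"
  by (rule measure_pmf.integrable_const_bound[where B = B]) (use assms in auto)

lemma sum_card_swap:
  assumes "finite U" "finite Z"
  shows "(\<Sum>u\<in>U. card {z\<in>Z. P u z}) = (\<Sum>z\<in>Z. card {u\<in>U. P u z})"
proof -
  have "(\<Sum>u\<in>U. card {z\<in>Z. P u z}) = (\<Sum>u\<in>U. \<Sum>z\<in>Z. if P u z then 1 else 0)"
    using assms by (simp add: sum.inter_filter[symmetric])
  also have "\<dots> = (\<Sum>z\<in>Z. \<Sum>u\<in>U. if P u z then 1 else 0)" by (rule sum.swap)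
  also have "\<dots> = (\<Sum>z\<in>Z. card {u\<in>U. P u z})"
    using assms by (simp add: sum.inter_filter[symmetric])
  finally show ?thesis .
qed

lemma card_prd_preimage:
  assumes "0 < n"
  shows "card {u \<in> {..<n}. prd n u \<notin> C} = card ({..<n} - C)"
proof -
  have b: "bij_betw (prd n) {..<n} {..<n}" using bij_prd assms by blast
  have "prd n ` {u \<in> {..<n}. prd n u \<notin> C} = {..<n} - C"
  proof
    show "prd n ` {u \<in> {..<n}. prd n u \<notin> C} \<subseteq> {..<n} - C"
      using b by (auto simp: bij_betw_def)
    show "{..<n} - C \<subseteq> prd n ` {u \<in> {..<n}. prd n u \<notin> C}"
    proof
      fix x assume x: "x \<in> {..<n} - C"
      then obtain u where "u < n" "x = prd n u" using b unfolding bij_betw_def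
        by (metis DiffD1 imageE lessThan_iff)
      then show "x \<in> prd n ` {u \<in> {..<n}. prd n u \<notin> C}" using x by auto
    qed
  qed
  moreover have "inj_on (prd n) {u \<in> {..<n}. prd n u \<notin> C}"
    using b unfolding bij_betw_def by (rule inj_on_subset[OF conjunct1]) auto
  ultimately show ?thesis by (metis card_image)
qed

lemma L1:
  assumes "0 < n"
  shows "(\<Sum>u<n. (if C \<union> arc n u r = {} then X else 0)) =
         real n * (if C = {} then X else 0) * (1 - (if 1 \<le> r then 1 else 0))"
  using assms arc_empty_iff[OF assms, of _ r] by (cases "r = 0") auto

lemma card_gaps_step:
  assumes "u < n"
  shows "card (gaps n (C \<union> arc n u r)) \<le>
         card {z \<in> gaps n C. z \<notin> arc n u r} + (if 1 \<le> r \<and> prd n u \<notin> C then 1 else 0)"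
proof -
  let ?S1 = "{z \<in> gaps n C. z \<notin> arc n u r}" and ?S2 = "{z. z = prd n u \<and> z \<notin> C \<and> 1 \<le> r}"
  have fin1: "finite ?S1" by (auto simp: gaps_def)
  have fin2: "finite ?S2" by auto
  have "card (gaps n (C \<union> arc n u r)) \<le> card (?S1 \<union> ?S2)"
    by (rule card_mono) (use fin1 fin2 gaps_union_arc[OF assms] in auto)
  also have "\<dots> \<le> card ?S1 + card ?S2" by (rule card_Un_le)
  also have "?S2 = (if 1 \<le> r \<and> prd n u \<notin> C then {prd n u} else {})" by auto
  then have "card ?S2 = (if 1 \<le> r \<and> prd n u \<notin> C then 1 else 0)" by simp
  finally show ?thesis .
qed

lemma L2:
  assumes "0 < n"
  shows "(\<Sum>u<n. card (gaps n (C \<union> arc n u r))) \<le>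
         card (gaps n C) * (n - min r n) + (if 1 \<le> r then card ({..<n} - C) else 0)"
proof -
  have "(\<Sum>u<n. card (gaps n (C \<union> arc n u r))) \<le>
        (\<Sum>u<n. card {z \<in> gaps n C. z \<notin> arc n u r} + (if 1 \<le> r \<and> prd n u \<notin> C then 1 else 0))"
    by (rule sum_mono) (use card_gaps_step in auto)
  also have "\<dots> = (\<Sum>u<n. card {z \<in> gaps n C. z \<notin> arc n u r}) +
                  (\<Sum>u<n. (if 1 \<le> r \<and> prd n u \<notin> C then 1 else 0))"
    by (rule sum.distrib)
  also have "(\<Sum>u<n. card {z \<in> gaps n C. z \<notin> arc n u r}) =
             (\<Sum>z\<in>gaps n C. card {u \<in> {..<n}. z \<notin> arc n u r})"
    by (rule sum_card_swap) (auto simp: gaps_def)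
  also have "\<dots> = (\<Sum>z\<in>gaps n C. n - min r n)"
    by (rule sum.cong[OF refl], rule card_arc_misses) (auto simp: gaps_def)
  also have "\<dots> = card (gaps n C) * (n - min r n)" by simp
  also have "(\<Sum>u<n. (if 1 \<le> r \<and> prd n u \<notin> C then 1 else 0)) =
             (if 1 \<le> r then card {u \<in> {..<n}. prd n u \<notin> C} else 0)"
    by (cases "1 \<le> r") (simp_all add: sum.inter_filter[symmetric])
  also have "\<dots> = (if 1 \<le> r then card ({..<n} - C) else 0)"
    using card_prd_preimage[OF assms] by simp
  finally show ?thesis .
qed

lemma L3:
  assumes "0 < n"
  shows "(\<Sum>u<n. card ({..<n} - (C \<union> arc n u r))) = card ({..<n} - C) * (n - min r n)"
proof -
  have "(\<Sum>u<n. card ({..<n} - (C \<union> arc n u r))) = (\<Sum>u<n. card {x \<in> {..<n} - C. x \<notin> arc n u r})"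
    by (rule sum.cong) (auto intro!: arg_cong[where f = card])
  also have "\<dots> = (\<Sum>x\<in>{..<n} - C. card {u \<in> {..<n}. x \<notin> arc n u r})"
    by (rule sum_card_swap) auto
  also have "\<dots> = (\<Sum>x\<in>{..<n} - C. n - min r n)"
    by (rule sum.cong[OF refl], rule card_arc_misses) auto
  also have "\<dots> = card ({..<n} - C) * (n - min r n)" by simp
  finally show ?thesis .
qed

definition Ind :: "nat \<Rightarrow> real" where "Ind r = (if 1 \<le> r then 1 else 0)"
definition Sn :: "nat \<Rightarrow> nat \<Rightarrow> real" where "Sn n r = real (min r n) / real n"

definition fbQ :: "nat pmf \<Rightarrow> real" where "fbQ Q = measure_pmf.expectation Q Ind"
definition qQ :: "nat pmf \<Rightarrow> nat \<Rightarrow> real" where "qQ Q n = measure_pmf.expectation Q (Sn n)"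

definition Phi :: "nat pmf \<Rightarrow> nat \<Rightarrow> nat \<Rightarrow> nat set \<Rightarrow> real" where
  "Phi Q n k C = (if C = {} then 1 else 0) * (1 - fbQ Q) ^ k
     + real (card (gaps n C)) * (1 - qQ Q n) ^ k
     + real (card ({..<n} - C)) * (real k * (1 - qQ Q n) ^ (k - 1) * fbQ Q / real n)"

lemma Ind_bounds: "0 \<le> Ind r" "Ind r \<le> 1" by (auto simp: Ind_def)
lemma Sn_bounds: "0 < n \<Longrightarrow> 0 \<le> Sn n r" "0 < n \<Longrightarrow> Sn n r \<le> 1" by (auto simp: Sn_def)

lemma int_Ind: "integrable (measure_pmf Q) Ind"
  by (rule integrable_bounded_pmf[where B = 1]) (auto simp: Ind_def)
lemma int_Sn: "0 < n \<Longrightarrow> integrable (measure_pmf Q) (Sn n)"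
  by (rule integrable_bounded_pmf[where B = 1]) (auto simp: Sn_def)

lemma expectation_le_1:
  fixes f :: "'a \<Rightarrow> real"
  assumes "\<And>x. f x \<le> 1" "\<And>x. 0 \<le> f x"
  shows "measure_pmf.expectation Q f \<le> 1"
proof -
  have "measure_pmf.expectation Q f \<le> measure_pmf.expectation Q (\<lambda>_. 1)"
    by (rule integral_mono) (auto intro: integrable_bounded_pmf[where B = 1] simp: assms abs_le_iff
        order_trans[OF _ assms(1)] intro!: order_trans[OF _ assms(2)])
  then show ?thesis by simp
qed

lemma fb_bounds: "0 \<le> fbQ Q" "fbQ Q \<le> 1"
  unfolding fbQ_def by (auto intro!: integral_nonneg expectation_le_1 simp: Ind_bounds)

lemma q_bounds: "0 < n \<Longrightarrow> 0 \<le> qQ Q n" "0 < n \<Longrightarrow> qQ Q n \<le> 1"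
  unfolding qQ_def by (auto intro!: integral_nonneg expectation_le_1 simp: Sn_bounds)


lemma Lsum:
  assumes n: "0 < n"
  shows "(\<Sum>u<n. Phi Q n k (C \<union> arc n u r)) \<le>
     real n * (if C = {} then 1 else 0) * (1 - Ind r) * (1 - fbQ Q) ^ k
     + (real (card (gaps n C)) * (real n - real (min r n)) + Ind r * real (card ({..<n} - C))) * (1 - qQ Q n) ^ k
     + real (card ({..<n} - C)) * (real n - real (min r n)) * (real k * (1 - qQ Q n) ^ (k - 1) * fbQ Q / real n)"
proof -
  define fb where "fb = fbQ Q"
  define q where "q = qQ Q n"
  define \<beta> where "\<beta> = real k * (1 - q) ^ (k - 1) * fb / real n"
  have \<beta>0: "0 \<le> \<beta>" unfolding \<beta>_def fb_def q_def using fb_bounds q_bounds[OF n] by auto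
  have q1: "0 \<le> (1 - q) ^ k" unfolding q_def using q_bounds[OF n] by auto
  have e1: "(\<Sum>u<n. Phi Q n k (C \<union> arc n u r)) =
        (\<Sum>u<n. (if C \<union> arc n u r = {} then (1 - fb) ^ k else 0))
      + (\<Sum>u<n. real (card (gaps n (C \<union> arc n u r)))) * (1 - q) ^ k
      + (\<Sum>u<n. real (card ({..<n} - (C \<union> arc n u r)))) * \<beta>"
    unfolding Phi_def fb_def[symmetric] q_def[symmetric] \<beta>_def[symmetric]
    by (simp add: sum.distrib sum_distrib_right, intro sum.cong, auto)
  have e2: "(\<Sum>u<n. (if C \<union> arc n u r = {} then (1 - fb) ^ k else 0)) =
       real n * (if C = {} then (1 - fb) ^ k else 0) * (1 - Ind r)"
    unfolding Ind_def by (rule L1[OF n])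
  have e3: "(\<Sum>u<n. real (card ({..<n} - (C \<union> arc n u r)))) =
             real (card ({..<n} - C)) * (real n - real (min r n))"
    using L3[OF n, of C r] by (metis of_nat_diff of_nat_mult of_nat_sum min.cobounded2)
  have e4: "(\<Sum>u<n. real (card (gaps n (C \<union> arc n u r)))) \<le>
             real (card (gaps n C)) * (real n - real (min r n)) + Ind r * real (card ({..<n} - C))"
  proof -
    have "real (\<Sum>u<n. card (gaps n (C \<union> arc n u r))) \<le>
          real (card (gaps n C) * (n - min r n) + (if 1 \<le> r then card ({..<n} - C) else 0))"
      using L2[OF n, of C r] by linarith
    then show ?thesis by (cases "1 \<le> r") (auto simp: of_nat_diff Ind_def)
  qed
  have e5: "(\<Sum>u<n. real (card (gaps n (C \<union> arc n u r)))) * (1 - q) ^ k \<le>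
       (real (card (gaps n C)) * (real n - real (min r n)) + Ind r * real (card ({..<n} - C))) * (1 - q) ^ k"
    by (rule mult_right_mono[OF e4 q1])
  have e6: "real n * (if C = {} then (1 - fb) ^ k else 0) * (1 - Ind r) =
            real n * (if C = {} then 1 else 0) * (1 - Ind r) * (1 - fb) ^ k" by simp
  have "(\<Sum>u<n. Phi Q n k (C \<union> arc n u r)) \<le>
     real n * (if C = {} then 1 else 0) * (1 - Ind r) * (1 - fb) ^ k
     + (real (card (gaps n C)) * (real n - real (min r n)) + Ind r * real (card ({..<n} - C))) * (1 - q) ^ k
     + real (card ({..<n} - C)) * (real n - real (min r n)) * \<beta>"
    using e1[unfolded e2 e3] e5 e6 by linarith
  then show ?thesis unfolding fb_def q_def \<beta>_def .
qed


lemma pmf_covf_Suc: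
  assumes n: "0 < n"
  shows "pmf (covf Q n C (Suc k)) F =
     measure_pmf.expectation Q (\<lambda>r. (\<Sum>u<n. pmf (covf Q n (C \<union> arc n u r) k) F) / real n)"
proof -
  have "pmf (covf Q n C (Suc k)) F =
     measure_pmf.expectation (pmf_of_set {..<n}) (\<lambda>u. measure_pmf.expectation Q (\<lambda>r. pmf (covf Q n (C \<union> arc n u r) k) F))"
    unfolding covf_Suc' by (simp only: pmf_bind)
  also have "\<dots> = (\<Sum>u<n. measure_pmf.expectation Q (\<lambda>r. pmf (covf Q n (C \<union> arc n u r) k) F)) / real n"
    using n by (subst integral_pmf_of_set) auto
  also have "(\<Sum>u<n. measure_pmf.expectation Q (\<lambda>r. pmf (covf Q n (C \<union> arc n u r) k) F)) =
     measure_pmf.expectation Q (\<lambda>r. (\<Sum>u<n. pmf (covf Q n (C \<union> arc n u r) k) F))"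
    by (rule Bochner_Integration.integral_sum[symmetric]) (auto intro: integrable_bounded_pmf[where B = 1] simp: pmf_le_1)
  also have "\<dots> / real n = measure_pmf.expectation Q (\<lambda>r. (\<Sum>u<n. pmf (covf Q n (C \<union> arc n u r) k) F) / real n)"
    by simp
  finally show ?thesis .
qed

lemma alg1: "E0 * Y ^ k * Y + g * X ^ k * X + (m * (real k * X ^ k * fb / real n)) + m / real n * X ^ k * fb
   = E0 * Y ^ Suc k + g * X ^ Suc k + m * (real (Suc k) * X ^ (Suc k - 1) * fb / real n)"
  by (simp add: algebra_simps add_divide_distrib)

lemma alg2: "0 < n \<Longrightarrow> (real n * E0 * (1 - I) * Y ^ k
     + (g * (real n - real s) + I * m) * X ^ k
     + m * (real n - real s) * \<beta>) / real n = E0 * (1 - I) * Y ^ k + (g * (1 - real s / real n) + I * m / real n) * X ^ k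
                      + m * (1 - real s / real n) * \<beta>"
  by (simp add: field_simps)

lemma alg3: "(E0 * (1 - I) * Y ^ k + (g * (1 - S) + I * m / real n) * X ^ k
                      + m * (1 - S) * \<beta>) = (E0 * Y ^ k + g * X ^ k + m * \<beta>) + (- E0 * Y ^ k + m / real n * X ^ k) * I + (- g * X ^ k - m * \<beta>) * S"
  by (simp add: algebra_simps)

lemma main_ind:
  assumes n: "0 < n"
  shows "C \<subseteq> {..<n} \<Longrightarrow> 1 - pmf (covf Q n C k) {..<n} \<le> Phi Q n k C"
proof (induction k arbitrary: C)
  case 0
  show ?case
  proof (cases "C = {..<n}")
    case True
    then show ?thesis by (auto simp: Phi_def pmf_return)
  next
    case False
    show ?thesis
    proof (cases "C = {}")
      case True then show ?thesis using n by (auto simp: Phi_def pmf_return indicator_def)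
    next
      case ne: False
      have "gaps n C \<noteq> {}" by (rule gaps_nonempty) (use 0 False ne in auto)
      moreover have "finite (gaps n C)" by (auto simp: gaps_def)
      ultimately have "1 \<le> card (gaps n C)" by (simp add: Suc_le_eq card_gt_0_iff)
      then show ?thesis using False ne by (auto simp: Phi_def pmf_return indicator_def)
    qed
  qed
next
  case (Suc k)
  define fb where "fb = fbQ Q"
  define q where "q = qQ Q n"
  define \<beta> where "\<beta> = real k * (1 - q) ^ (k - 1) * fb / real n"
  define g where "g = real (card (gaps n C))"
  define m where "m = real (card ({..<n} - C))"
  define E0 where "E0 = (if C = {} then 1 else 0 :: real)"
  define h where "h = (\<lambda>u r. pmf (covf Q n (C \<union> arc n u r) k) {..<n})"
  define H where "H = (\<lambda>r. (\<Sum>u<n. h u r) / real n)"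
  define \<Psi> where "\<Psi> = (\<lambda>r. E0 * (1 - Ind r) * (1 - fb) ^ k + (g * (1 - Sn n r) + Ind r * m / real n) * (1 - q) ^ k
                      + m * (1 - Sn n r) * \<beta>)"
  have pw: "1 - H r \<le> \<Psi> r" for r
  proof -
    have "1 - H r = (\<Sum>u<n. 1 - h u r) / real n"
      unfolding H_def using n by (simp add: sum_subtractf field_simps)
    also have "\<dots> \<le> (\<Sum>u<n. Phi Q n k (C \<union> arc n u r)) / real n"
      by (intro divide_right_mono sum_mono) (use Suc arc_subset[OF n] in \<open>auto simp: h_def\<close>)
    also have "\<dots> \<le> (real n * E0 * (1 - Ind r) * (1 - fb) ^ k
     + (g * (real n - real (min r n)) + Ind r * m) * (1 - q) ^ k
     + m * (real n - real (min r n)) * \<beta>) / real n"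
      by (intro divide_right_mono) (use Lsum[OF n, of Q k C r] in \<open>auto simp: E0_def g_def m_def \<beta>_def fb_def q_def\<close>)
    also have "\<dots> = \<Psi> r"
      unfolding \<Psi>_def Sn_def using alg2[OF n] by simp
    finally show ?thesis .
  qed
  have intH: "integrable (measure_pmf Q) H"
  proof (rule integrable_bounded_pmf[where B = 1])
    fix r
    have "(\<Sum>u<n. h u r) \<le> of_nat (card {..<n}) * 1"
      by (rule sum_bounded_above) (auto simp: h_def pmf_le_1)
    moreover have "0 \<le> (\<Sum>u<n. h u r)" by (rule sum_nonneg) (auto simp: h_def)
    ultimately show "\<bar>H r\<bar> \<le> 1" using n by (simp add: H_def)
  qed
  have int\<Psi>: "integrable (measure_pmf Q) \<Psi>"
    unfolding \<Psi>_def using int_Ind int_Sn[OF n] by auto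
  have "1 - pmf (covf Q n C (Suc k)) {..<n} = 1 - measure_pmf.expectation Q H"
    unfolding pmf_covf_Suc[OF n] H_def h_def ..
  also have "\<dots> = measure_pmf.expectation Q (\<lambda>r. 1 - H r)"
    using intH by simp
  also have "\<dots> \<le> measure_pmf.expectation Q \<Psi>"
    by (rule integral_mono) (use intH int\<Psi> pw in auto)
  also have "measure_pmf.expectation Q \<Psi> =
     E0 * (1 - fb) ^ k * (1 - fb) + g * (1 - q) ^ k * (1 - q) + m * \<beta> * (1 - q) + m / real n * (1 - q) ^ k * fb"
  proof -
    define c0 where "c0 = E0 * (1 - fb) ^ k + g * (1 - q) ^ k + m * \<beta>"
    define c1 where "c1 = - E0 * (1 - fb) ^ k + m / real n * (1 - q) ^ k"
    define c2 where "c2 = - g * (1 - q) ^ k - m * \<beta>"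
    have "\<Psi> = (\<lambda>r. c0 + c1 * Ind r + c2 * Sn n r)"
      unfolding \<Psi>_def c0_def c1_def c2_def by (rule ext, rule alg3)
    then have "measure_pmf.expectation Q \<Psi> = c0 + c1 * fb + c2 * q"
      using int_Ind int_Sn[OF n] by (simp add: fb_def q_def fbQ_def qQ_def)
    then show ?thesis unfolding c0_def c1_def c2_def by (simp add: algebra_simps)
  qed
  also have "\<dots> = Phi Q n (Suc k) C"
  proof -
    have ee: "real k * (1 - q) ^ (k - 1) * (1 - q) = real k * (1 - q) ^ k"
      by (cases k) auto
    have ef: "m * \<beta> * (1 - q) = m * (real k * (1 - q) ^ (k - 1) * (1 - q)) * fb / real n"
      unfolding \<beta>_def by (simp add: ac_simps)
    have "m * \<beta> * (1 - q) = m * (real k * (1 - q) ^ k * fb / real n)"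
      using ef unfolding ee by simp
    then show ?thesis
      unfolding Phi_def E0_def[symmetric] g_def[symmetric] m_def[symmetric] fb_def[symmetric] q_def[symmetric]
      using alg1[of E0 "1 - fb" k g "1 - q" m fb n] by simp
  qed
  finally show ?case .
qed

lemma mono_cov:
  assumes h: "\<And>r. h r \<le> r" and n: "0 < n"
  shows "C \<subseteq> D \<Longrightarrow> D \<subseteq> {..<n} \<Longrightarrow>
     pmf (covf (map_pmf h Q) n C k) {..<n} \<le> pmf (covf Q n D k) {..<n}"
proof (induction k arbitrary: C D)
  case 0
  then show ?case by (auto simp: pmf_return indicator_def)
next
  case (Suc k)
  have "pmf (covf (map_pmf h Q) n C (Suc k)) {..<n} =
     measure_pmf.expectation Q (\<lambda>r. (\<Sum>u<n. pmf (covf (map_pmf h Q) n (C \<union> arc n u (h r)) k) {..<n}) / real n)"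
    unfolding pmf_covf_Suc[OF n] by simp
  also have "\<dots> \<le> measure_pmf.expectation Q (\<lambda>r. (\<Sum>u<n. pmf (covf Q n (D \<union> arc n u r) k) {..<n}) / real n)"
  proof (rule integral_mono)
    show "integrable (measure_pmf Q) (\<lambda>r. (\<Sum>u<n. pmf (covf (map_pmf h Q) n (C \<union> arc n u (h r)) k) {..<n}) / real n)"
      by (intro integrable_divide Bochner_Integration.integrable_sum integrable_bounded_pmf[where B = 1])
         (auto simp: pmf_le_1)
    show "integrable (measure_pmf Q) (\<lambda>r. (\<Sum>u<n. pmf (covf Q n (D \<union> arc n u r) k) {..<n}) / real n)"
      by (intro integrable_divide Bochner_Integration.integrable_sum integrable_bounded_pmf[where B = 1])
         (auto simp: pmf_le_1)
    fix r
    show "(\<Sum>u<n. pmf (covf (map_pmf h Q) n (C \<union> arc n u (h r)) k) {..<n}) / real n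
       \<le> (\<Sum>u<n. pmf (covf Q n (D \<union> arc n u r) k) {..<n}) / real n"
    proof (intro divide_right_mono sum_mono Suc.IH)
      fix u
      show "C \<union> arc n u (h r) \<subseteq> D \<union> arc n u r" using Suc.prems arc_mono[OF h] by blast
      show "D \<union> arc n u r \<subseteq> {..<n}" using Suc.prems arc_subset[OF n] by blast
    qed auto
  qed
  also have "\<dots> = pmf (covf Q n D (Suc k)) {..<n}"
    unfolding pmf_covf_Suc[OF n] ..
  finally show ?case .
qed

lemma expectation_sums:
  fixes p :: "nat pmf" and g :: "nat \<Rightarrow> real"
  assumes "\<And>k. \<bar>g k\<bar> \<le> B"
  shows "(\<lambda>k. pmf p k * g k) sums measure_pmf.expectation p g"
proof -
  have int: "integrable (measure_pmf p) g" by (rule integrable_bounded_pmf) (rule assms)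
  have e: "measure_pmf.expectation p g = integral\<^sup>L (count_space UNIV) (\<lambda>k. pmf p k * g k)"
    unfolding measure_pmf_eq_density by (subst integral_density) auto
  have int2: "integrable (count_space UNIV) (\<lambda>k. pmf p k * g k)"
    using int unfolding measure_pmf_eq_density by (subst (asm) integrable_density) auto
  show ?thesis unfolding e by (rule sums_integral_count_space_nat[OF int2])
qed

lemma poisson_sums1:
  assumes t: "0 < t"
  shows "(\<lambda>k. pmf (poisson_pmf t) k * x ^ k) sums (exp (- t) * exp (t * x))"
proof -
  have "(\<lambda>k. exp (- t) * ((t * x) ^ k /\<^sub>R fact k)) sums (exp (- t) * exp (t * x))"
    by (intro sums_mult exp_converges)
  moreover have "(\<lambda>k. exp (- t) * ((t * x) ^ k /\<^sub>R fact k)) = (\<lambda>k. pmf (poisson_pmf t) k * x ^ k)"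
    using t by (auto simp: power_mult_distrib field_simps)
  ultimately show ?thesis by simp
qed

lemma poisson_sums2:
  assumes t: "0 < t"
  shows "(\<lambda>k. pmf (poisson_pmf t) k * (real k * y ^ (k - 1))) sums (t * exp (- t) * exp (t * y))"
proof -
  have "(\<lambda>k. t * exp (- t) * ((t * y) ^ k /\<^sub>R fact k)) sums (t * exp (- t) * exp (t * y))"
    by (intro sums_mult exp_converges)
  moreover have "(\<lambda>k. t * exp (- t) * ((t * y) ^ k /\<^sub>R fact k)) =
       (\<lambda>k. pmf (poisson_pmf t) (Suc k) * (real (Suc k) * y ^ (Suc k - 1)))"
  proof
    fix k
    have "fact (Suc k) = real (Suc k) * fact k" by simp
    then show "t * exp (- t) * ((t * y) ^ k /\<^sub>R fact k) =
       pmf (poisson_pmf t) (Suc k) * (real (Suc k) * y ^ (Suc k - 1))"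
      using t by (simp add: power_mult_distrib field_simps del: of_nat_Suc fact_Suc)
  qed
  ultimately have "(\<lambda>k. pmf (poisson_pmf t) (Suc k) * (real (Suc k) * y ^ (Suc k - 1))) sums (t * exp (- t) * exp (t * y))"
    by simp
  then show ?thesis by (subst (asm) sums_Suc_iff) simp
qed


lemma cover_bound:
  assumes n: "0 < n" and t: "0 < t" and h: "\<And>r. h r \<le> r"
  shows "1 - cover_time_le R n t \<le>
     exp (- t * fbQ (map_pmf h R)) + t * fbQ (map_pmf h R) * exp (- t * qQ (map_pmf h R) n)"
proof -
  define Q' where "Q' = map_pmf h R"
  define fb where "fb = fbQ Q'"
  define q where "q = qQ Q' n"
  define P where "P = poisson_pmf t"
  define G where "G = (\<lambda>k. pmf (cover_pmf R n k) {..<n})"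
  have G01: "0 \<le> G k" "G k \<le> 1" for k by (auto simp: G_def pmf_le_1)
  have ct: "cover_time_le R n t = measure_pmf.expectation P G"
    unfolding cover_time_le_def X_pmf_def using t
    by (simp add: measure_pmf_single pmf_bind P_def G_def)
  have intG: "integrable (measure_pmf P) G"
    by (rule integrable_bounded_pmf[where B = 1]) (use G01 in auto)
  have s1: "(\<lambda>k. pmf P k * (1 - G k)) sums (1 - measure_pmf.expectation P G)"
  proof -
    have "(\<lambda>k. pmf P k * (1 - G k)) sums measure_pmf.expectation P (\<lambda>k. 1 - G k)"
      by (rule expectation_sums[where B = 1]) (use G01 in auto)
    moreover have "measure_pmf.expectation P (\<lambda>k. 1 - G k) = 1 - measure_pmf.expectation P G"
      using intG by simp
    ultimately show ?thesis by simp
  qed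
  have s2: "(\<lambda>k. pmf P k * (1 - fb) ^ k + fb * (pmf P k * (real k * (1 - q) ^ (k - 1))))
      sums (exp (- t) * exp (t * (1 - fb)) + fb * (t * exp (- t) * exp (t * (1 - q))))"
    unfolding P_def by (intro sums_add sums_mult poisson_sums1 poisson_sums2 t)
  have pw: "pmf P k * (1 - G k) \<le> pmf P k * (1 - fb) ^ k + fb * (pmf P k * (real k * (1 - q) ^ (k - 1)))" for k
  proof -
    have "1 - G k \<le> 1 - pmf (covf Q' n {} k) {..<n}"
      unfolding G_def cover_covf Q'_def using mono_cov[OF h n, of "{}" "{}" R k] by simp
    also have "\<dots> \<le> Phi Q' n k {}" by (rule main_ind[OF n]) simp
    also have "\<dots> = (1 - fb) ^ k + fb * (real k * (1 - q) ^ (k - 1))"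
      unfolding Phi_def fb_def q_def using n by (simp add: gaps_def field_simps)
    finally show ?thesis
      by (metis (no_types, lifting) distrib_left mult.left_commute mult_left_mono pmf_nonneg)
  qed
  have "1 - measure_pmf.expectation P G \<le> exp (- t) * exp (t * (1 - fb)) + fb * (t * exp (- t) * exp (t * (1 - q)))"
    by (rule sums_le[OF _ s1 s2]) (use pw in auto)
  also have "exp (- t) * exp (t * (1 - fb)) = exp (- t * fb)"
    by (simp add: mult_exp_exp algebra_simps)
  also have "fb * (t * exp (- t) * exp (t * (1 - q))) = t * fb * exp (- t * q)"
  proof -
    have "exp (- t) * exp (t * (1 - q)) = exp (- t * q)" by (simp add: mult_exp_exp algebra_simps)
    then show ?thesis by (metis mult.assoc mult.commute)
  qed
  finally show ?thesis unfolding ct fb_def q_def Q'_def .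
qed

lemma dyadic:
  fixes x r :: real
  assumes "0 \<le> x" "0 \<le> r"
  shows "(\<Sum>i<M. x * (1 / 2 ^ (i + 2)) * (if x * (1 / 2 ^ (i + 1)) \<le> r then 1 else 0)) \<le> min r (x / 2)"
  using assms(1)
proof (induction M arbitrary: x)
  case 0 then show ?case using assms by simp
next
  case (Suc M)
  have "(\<Sum>i<Suc M. x * (1 / 2 ^ (i + 2)) * (if x * (1 / 2 ^ (i + 1)) \<le> r then 1 else 0)) =
        x / 4 * (if x / 2 \<le> r then 1 else 0) +
        (\<Sum>i<M. (x / 2) * (1 / 2 ^ (i + 2)) * (if (x / 2) * (1 / 2 ^ (i + 1)) \<le> r then 1 else 0))"
    by (subst sum.lessThan_Suc_shift) (simp add: field_simps)
  also have "\<dots> \<le> x / 4 * (if x / 2 \<le> r then 1 else 0) + min r (x / 4)"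
    using Suc.IH[of "x / 2"] Suc.prems by simp
  also have "\<dots> \<le> min r (x / 2)" using Suc.prems assms by auto
  finally show ?case .
qed

lemma radius_tail_mono: "x \<le> y \<Longrightarrow> radius_tail R y \<le> radius_tail R x"
  unfolding radius_tail_def by (rule measure_pmf.finite_measure_mono) auto

lemma radius_tail_nonneg: "0 \<le> radius_tail R x"
  unfolding radius_tail_def by simp

lemma expectation_indicator_pmf:
  "measure_pmf.expectation Q (indicator A :: _ \<Rightarrow> real) = measure_pmf.prob Q A"
  by simp

definition trunc :: "real \<Rightarrow> nat \<Rightarrow> nat" where
  "trunc thr r = (if thr \<le> real r then r else 0)"

lemma trunc_le: "trunc thr r \<le> r" by (simp add: trunc_def)

lemma fb_trunc:
  assumes "0 < thr"
  shows "fbQ (map_pmf (trunc thr) R) = radius_tail R thr"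
proof -
  have "fbQ (map_pmf (trunc thr) R) = measure_pmf.expectation R (\<lambda>r. Ind (trunc thr r))"
    by (simp add: fbQ_def)
  also have "(\<lambda>r. Ind (trunc thr r)) = indicator {k. thr \<le> real k}"
  proof
    fix r
    show "Ind (trunc thr r) = indicator {k. thr \<le> real k} r"
    proof (cases "thr \<le> real r")
      case True
      then have "1 \<le> r" using assms by (cases r) auto
      then show ?thesis using True by (simp add: Ind_def trunc_def)
    next
      case False then show ?thesis by (simp add: Ind_def trunc_def)
    qed
  qed
  also have "measure_pmf.expectation R (indicator {k. thr \<le> real k}) = radius_tail R thr"
    unfolding radius_tail_def by simp
  finally show ?thesis .
qed

lemma q_trunc:
  assumes n: "0 < n"
  shows "(\<Sum>i<M. radius_tail R (real n * (1 / 2 ^ (i + 1))) * (1 / 2 ^ (i + 2)))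
         \<le> qQ (map_pmf (trunc (real n * (1 / 2 ^ M))) R) n"
proof -
  define thr where "thr = real n * (1 / 2 ^ M)"
  define S where "S = (\<lambda>r::nat. \<Sum>i<M. (1 / 2 ^ (i + 2)) * indicator {k. real n * (1 / 2 ^ (i + 1)) \<le> real k} r :: real)"
  have pw: "S r \<le> Sn n (trunc thr r)" for r
  proof -
    have eqS: "real n * S r = (\<Sum>i<M. real n * (1 / 2 ^ (i + 2)) * (if real n * (1 / 2 ^ (i + 1)) \<le> real r then 1 else 0))"
      unfolding S_def by (simp add: sum_distrib_left indicator_def mult.assoc of_bool_def)
    show ?thesis
    proof (cases "thr \<le> real r")
      case True
      have "real n * S r \<le> min (real r) (real n / 2)"
        unfolding eqS by (rule dyadic) auto
      also have "\<dots> \<le> real (min r n)" by auto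
      finally show ?thesis using True n by (simp add: Sn_def trunc_def field_simps)
    next
      case False
      have "S r = 0"
      proof -
        have "real n * (1 / 2 ^ (i + 1)) > real r" if "i < M" for i
        proof -
          have "(2::real) ^ (i + 1) \<le> 2 ^ M" using that by (intro power_increasing) auto
          then have "real n * (1 / 2 ^ M) \<le> real n * (1 / 2 ^ (i + 1))"
            by (intro mult_left_mono divide_left_mono) auto
          then show ?thesis using False unfolding thr_def by simp
        qed
        then have "\<And>i. i < M \<Longrightarrow> \<not> (real n * (1 / 2 ^ (i + 1)) \<le> real r)" by (meson not_le)
        then show ?thesis unfolding S_def by (intro sum.neutral ballI) (simp add: indicator_def)
      qed
      then show ?thesis using n by (simp add: Sn_def)
    qed
  qed
  define A where "A = (\<lambda>i::nat. {k::nat. real n * (1 / 2 ^ (i + 1)) \<le> real k})"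
  have p4: "(1::real) \<le> 4 * 2 ^ i" for i :: nat
  proof -
    have "(1::real) \<le> 2 ^ i" by simp
    then show ?thesis by linarith
  qed
  have int_i: "integrable (measure_pmf R) (\<lambda>r. (1 / 2 ^ (i + 2)) * indicator (A i) r :: real)" for i
    by (rule integrable_bounded_pmf[where B = 1]) (auto simp: indicator_def p4)
  have "measure_pmf.expectation R S = (\<Sum>i<M. measure_pmf.expectation R (\<lambda>r. (1 / 2 ^ (i + 2)) * indicator (A i) r))"
    unfolding S_def A_def by (rule Bochner_Integration.integral_sum) (rule int_i[unfolded A_def])
  also have "\<dots> = (\<Sum>i<M. (1 / 2 ^ (i + 2)) * measure_pmf.prob R (A i))"
    by (rule sum.cong[OF refl]) (simp only: integral_mult_right_zero expectation_indicator_pmf)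
  also have "\<dots> = (\<Sum>i<M. radius_tail R (real n * (1 / 2 ^ (i + 1))) * (1 / 2 ^ (i + 2)))"
    unfolding radius_tail_def A_def by (simp add: mult.commute)
  finally have "(\<Sum>i<M. radius_tail R (real n * (1 / 2 ^ (i + 1))) * (1 / 2 ^ (i + 2))) = measure_pmf.expectation R S" ..
  also have "\<dots> \<le> measure_pmf.expectation R (\<lambda>r. Sn n (trunc thr r))"
  proof (rule integral_mono)
    show "integrable (measure_pmf R) S"
      unfolding S_def by (rule Bochner_Integration.integrable_sum) (rule int_i[unfolded A_def])
    show "integrable (measure_pmf R) (\<lambda>r. Sn n (trunc thr r))"
      by (rule integrable_bounded_pmf[where B = 1]) (use Sn_bounds[OF n] in \<open>auto simp: abs_le_iff intro: order_trans[OF _ Sn_bounds(1)[OF n]]\<close>)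
  qed (rule pw)
  also have "\<dots> = qQ (map_pmf (trunc thr) R) n" by (simp add: qQ_def)
  finally show ?thesis unfolding thr_def .
qed

lemma n_bound:
  assumes n: "0 < n" and fpos: "0 < radius_tail R (real n)"
  shows "1 - cover_time_le R n (4 / radius_tail R (real n)) \<le>
     exp (- (4 * (radius_tail R (real n * (1 / 2 ^ M)) / radius_tail R (real n))))
     + (4 * (radius_tail R (real n * (1 / 2 ^ M)) / radius_tail R (real n)))
       * exp (- (\<Sum>i<M. (4 / 2 ^ (i + 2)) * (radius_tail R (real n * (1 / 2 ^ (i + 1))) / radius_tail R (real n))))"
proof -
  define f where "f = radius_tail R"
  define t where "t = 4 / f (real n)"
  define thr where "thr = real n * (1 / 2 ^ M)"
  define A where "A = 4 * (f thr / f (real n))"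
  define B where "B = (\<Sum>i<M. (4 / 2 ^ (i + 2)) * (f (real n * (1 / 2 ^ (i + 1))) / f (real n)))"
  have t: "0 < t" using fpos by (simp add: t_def f_def)
  have thr: "0 < thr" using n by (simp add: thr_def)
  have A0: "0 \<le> A" using fpos radius_tail_nonneg[of R thr] by (simp add: A_def f_def)
  have fb: "fbQ (map_pmf (trunc thr) R) = f thr" using fb_trunc[OF thr] by (simp add: f_def)
  have tfb: "t * fbQ (map_pmf (trunc thr) R) = A" unfolding fb A_def t_def by simp
  have "B = t * (\<Sum>i<M. f (real n * (1 / 2 ^ (i + 1))) * (1 / 2 ^ (i + 2)))"
    unfolding B_def t_def by (simp add: sum_distrib_left field_simps)
  also have "\<dots> \<le> t * qQ (map_pmf (trunc thr) R) n"
    using q_trunc[OF n, where M=M and R=R] t unfolding thr_def f_def by (intro mult_left_mono) auto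
  finally have Bq: "B \<le> t * qQ (map_pmf (trunc thr) R) n" .
  have "1 - cover_time_le R n t \<le> exp (- t * fbQ (map_pmf (trunc thr) R))
      + t * fbQ (map_pmf (trunc thr) R) * exp (- t * qQ (map_pmf (trunc thr) R) n)"
    by (rule cover_bound[OF n t trunc_le])
  also have "\<dots> = exp (- A) + A * exp (- (t * qQ (map_pmf (trunc thr) R) n))"
    using tfb by simp
  also have "\<dots> \<le> exp (- A) + A * exp (- B)"
    using Bq A0 by (intro add_left_mono mult_left_mono) auto
  finally show ?thesis unfolding A_def B_def t_def thr_def f_def .
qed

lemma choose_M:
  assumes "0 < \<epsilon>"
  shows "\<exists>M::nat. exp (- (4 * 2 ^ M)) + 4 * 2 ^ M * exp (- (2 * real M)) < \<epsilon>"
proof -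
  define M where "M = nat \<lceil>ln (5 / \<epsilon>)\<rceil> + 1"
  have "ln (5 / \<epsilon>) < real M" unfolding M_def by linarith
  then have "exp (ln (5 / \<epsilon>)) < exp (real M)" by simp
  then have "5 / \<epsilon> < exp (real M)" using assms by simp
  then have e5: "5 * exp (- real M) < \<epsilon>"
    using assms by (simp add: exp_minus field_simps)
  have "real M < 2 ^ M" by (metis of_nat_less_two_power)
  then have "real M \<le> 4 * 2 ^ M" by linarith
  then have a1: "exp (- (4 * 2 ^ M)) \<le> exp (- real M)" by simp
  have "(2::real) \<le> exp 1" using exp_ge_add_one_self[of 1] by simp
  then have "(2::real) ^ M \<le> exp 1 ^ M" by (intro power_mono) auto
  also have "\<dots> = exp (real M)" by (simp add: exp_of_nat_mult[symmetric])
  finally have "(2::real) ^ M \<le> exp (real M)" .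
  then have "4 * 2 ^ M * exp (- (2 * real M)) \<le> 4 * exp (real M) * exp (- (2 * real M))"
    by (intro mult_right_mono) auto
  also have "\<dots> = 4 * exp (- real M)"
  proof -
    have "exp (real M) * exp (- (2 * real M)) = exp (- real M)" by (simp add: mult_exp_exp)
    then show ?thesis by (simp add: mult.assoc)
  qed
  finally show ?thesis using a1 e5 by (intro exI[of _ M]) linarith
qed

lemma powr_lemma: "((1::real) / 2 ^ M) powr (- 1) = 2 ^ M"
  by (simp add: powr_minus_divide)


theorem mainTheorem9:
  fixes R :: "nat pmf"
  assumes "0 \<notin> set_pmf R"
    and "regularly_varying (-1) (radius_tail R)"
  shows "\<exists>a>0. ((\<lambda>n. if radius_tail R (real n) = 0 then 1
                     else cover_time_le R n (a / radius_tail R (real n)))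
                 \<longlonglongrightarrow> 1)"
proof -
  define f where "f = radius_tail R"
  have RV: "(\<lambda>n. f (real n * c) / f (real n)) \<longlonglongrightarrow> c powr (- 1)" if "0 < c" for c
  proof -
    have "((\<lambda>x. f (x * c) / f x) \<longlongrightarrow> c powr (- 1)) at_top"
      using assms(2) that unfolding regularly_varying_def f_def by auto
    then show ?thesis by (rule filterlim_compose[OF _ filterlim_real_sequentially])
  qed
  have "eventually (\<lambda>n. 0 < f (real n * 1) / f (real n)) sequentially"
    using RV[of 1] by (intro order_tendstoD(1)) auto
  then have fpos: "eventually (\<lambda>n. 0 < f (real n)) sequentially"
  proof (rule eventually_mono)
    fix n assume "0 < f (real n * 1) / f (real n)"
    then have "f (real n) \<noteq> 0" by auto
    then show "0 < f (real n)" using radius_tail_nonneg[of R "real n"] unfolding f_def by linarith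
  qed
  have "((\<lambda>n. if f (real n) = 0 then 1 else cover_time_le R n (4 / f (real n))) \<longlonglongrightarrow> 1)"
  proof (rule tendstoI)
    fix \<epsilon> :: real assume \<epsilon>: "0 < \<epsilon>"
    obtain M :: nat where M: "exp (- (4 * 2 ^ M)) + 4 * 2 ^ M * exp (- (2 * real M)) < \<epsilon>"
      using choose_M[OF \<epsilon>] by blast
    define A where "A = (\<lambda>n::nat. 4 * (f (real n * (1 / 2 ^ M)) / f (real n)))"
    define B where "B = (\<lambda>n::nat. \<Sum>i<M. (4 / 2 ^ (i + 2)) * (f (real n * (1 / 2 ^ (i + 1))) / f (real n)))"
    have lA: "A \<longlonglongrightarrow> 4 * 2 ^ M"
    proof -
      have "A \<longlonglongrightarrow> 4 * ((1 / 2 ^ M) powr (- 1))"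
        unfolding A_def by (intro tendsto_mult tendsto_const RV) auto
      then show ?thesis by (simp add: powr_lemma)
    qed
    have lB: "B \<longlonglongrightarrow> 2 * real M"
    proof -
      have "B \<longlonglongrightarrow> (\<Sum>i<M. (4 / 2 ^ (i + 2)) * ((1 / 2 ^ (i + 1)) powr (- 1)))"
        unfolding B_def by (intro tendsto_sum tendsto_mult tendsto_const RV) auto
      moreover have "(\<Sum>i<M. (4 / 2 ^ (i + 2)) * ((1 / 2 ^ (i + 1)) powr (- 1)) :: real) = 2 * real M"
      proof -
        have "(4 / 2 ^ (i + 2)) * ((1 / 2 ^ (i + 1)) powr (- 1)) = (2::real)" for i :: nat
          by (simp add: powr_lemma field_simps)
        then show ?thesis by simp
      qed
      ultimately show ?thesis by (simp add: mult.commute)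
    qed
    have "(\<lambda>n. exp (- A n) + A n * exp (- B n)) \<longlonglongrightarrow> exp (- (4 * 2 ^ M)) + 4 * 2 ^ M * exp (- (2 * real M))"
      by (intro tendsto_intros lA lB)
    then have evW: "eventually (\<lambda>n. exp (- A n) + A n * exp (- B n) < \<epsilon>) sequentially"
      using M by (rule order_tendstoD(2))
    have "eventually (\<lambda>n. 0 < n) sequentially" by (rule eventually_gt_at_top)
    with evW fpos have "eventually (\<lambda>n. 0 < n \<and> 0 < f (real n) \<and> exp (- A n) + A n * exp (- B n) < \<epsilon>) sequentially"
      by eventually_elim auto
    then show "eventually (\<lambda>n. dist (if f (real n) = 0 then 1 else cover_time_le R n (4 / f (real n))) 1 < \<epsilon>) sequentially"
    proof (rule eventually_mono)
      fix n assume h: "0 < n \<and> 0 < f (real n) \<and> exp (- A n) + A n * exp (- B n) < \<epsilon>"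
      have b: "1 - cover_time_le R n (4 / f (real n)) \<le> exp (- A n) + A n * exp (- B n)"
        using n_bound[of n R M] h unfolding A_def B_def f_def by auto
      have le1: "cover_time_le R n (4 / f (real n)) \<le> 1"
        unfolding cover_time_le_def by simp
      show "dist (if f (real n) = 0 then 1 else cover_time_le R n (4 / f (real n))) 1 < \<epsilon>"
        using h b le1 by (auto simp: dist_real_def)
    qed
  qed
  then show ?thesis unfolding f_def by (intro exI[of _ 4]) auto
qed

end
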